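(* Let $(G,r)$ be a symmetric group, $r(a,b)=({}^ab,a^b)$, and let $\Gamma=\{a\in G:\ {}^au=u\ \forall u\in G\}$. Then $\Gamma$ equals $\{a\in G: u^a=u\ \forall u\in G\}$, it is an abelian normal subgroup of $G$ invariant under the left and right actions of $G$ on itself, and, with $\widetilde{G}=G/\Gamma$ carrying the quotient symmetric group structure $r_{\widetilde G}(a\Gamma,b\Gamma)=({}^ab\,\Gamma,a^b\,\Gamma)$, the map $\varphi:\widetilde{G}\to[G]$, $a\Gamma\mapsto[a]$, is a well-defined isomorphism of symmetric sets from $(\widetilde{G},r_{\widetilde G})$ onto the retraction $\mathrm{Ret}(G,r)=([G],r_{[G]})$. In particular $[G]$ with multiplication $[a][b]=[ab]$ is a symmetric group and $\varphi$ is an isomorphism of symmetric groups.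
   Context: A symmetric group is a pair $(G,\sigma)$, $G$ a group, $\sigma(u,v)=({}^uv,u^v)$ an involutive bijection of $G\times G$ with ${}^a1=1,{}^1u=u,1^u=1,a^1=a$, ${}^{ab}u={}^a({}^bu)$, $a^{uv}=(a^u)^v$, ${}^a(uv)=({}^au)({}^{a^u}v)$, $(ab)^u=(a^{{}^bu})(b^u)$, $uv=({}^uv)(u^v)$; it is in particular a non-degenerate symmetric set (non-degenerate involutive set-theoretic solution of the Yang–Baxter equation). For a non-degenerate symmetric set $(X,r)$, $r(x,y)=({}^xy,x^y)$, define $x\sim y$ iff ${}^xz={}^yz$ for all $z\in X$; the retraction $\mathrm{Ret}(X,r)=([X],r_{[X]})$ is the set of classes $[X]=X/\sim$ with $r_{[X]}([x],[y])=([{}^xy],[x^y])$, a non-degenerate symmetric set. It is known (Takeuchi) that $(G/\Gamma, r_{\widetilde G})$ as in the claim is a well-defined symmetric group. *)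

theory Defs
  imports "HOL-Algebra.Coset"
begin

text \<open>A binary map r(x,y) = (L x y, R x y) on a set X is encoded by two functions:
  L x y = {}^x y (left action) and R x y = x^y (right action).\<close>

definition involutive_on :: "'a set \<Rightarrow> ('a \<Rightarrow> 'a \<Rightarrow> 'a) \<Rightarrow> ('a \<Rightarrow> 'a \<Rightarrow> 'a) \<Rightarrow> bool" where
  "involutive_on X L R \<longleftrightarrow>
     (\<forall>x\<in>X. \<forall>y\<in>X. L x y \<in> X \<and> R x y \<in> X) \<and>
     (\<forall>x\<in>X. \<forall>y\<in>X. L (L x y) (R x y) = x \<and> R (L x y) (R x y) = y)"

definition symmetric_set :: "'a set \<Rightarrow> ('a \<Rightarrow> 'a \<Rightarrow> 'a) \<Rightarrow> ('a \<Rightarrow> 'a \<Rightarrow> 'a) \<Rightarrow> bool" where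
  "symmetric_set X L R \<longleftrightarrow>
     involutive_on X L R \<and>
     (\<forall>x\<in>X. bij_betw (L x) X X) \<and>
     (\<forall>y\<in>X. bij_betw (\<lambda>x. R x y) X X) \<and>
     (\<forall>x\<in>X. \<forall>y\<in>X. \<forall>z\<in>X.
        (let r1 = (\<lambda>(a,b,c). (L a b, R a b, c));
             r2 = (\<lambda>(a,b,c). (a, L b c, R b c))
         in r1 (r2 (r1 (x,y,z))) = r2 (r1 (r2 (x,y,z)))))"

definition symmetric_group :: "('a,'b) monoid_scheme \<Rightarrow> ('a \<Rightarrow> 'a \<Rightarrow> 'a) \<Rightarrow> ('a \<Rightarrow> 'a \<Rightarrow> 'a) \<Rightarrow> bool" where
  "symmetric_group G L R \<longleftrightarrow>
     group G \<and> involutive_on (carrier G) L R \<and>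
     (\<forall>a\<in>carrier G. L a \<one>\<^bsub>G\<^esub> = \<one>\<^bsub>G\<^esub> \<and> L \<one>\<^bsub>G\<^esub> a = a \<and>
                     R \<one>\<^bsub>G\<^esub> a = \<one>\<^bsub>G\<^esub> \<and> R a \<one>\<^bsub>G\<^esub> = a) \<and>
     (\<forall>a\<in>carrier G. \<forall>b\<in>carrier G. \<forall>u\<in>carrier G.
        L (a \<otimes>\<^bsub>G\<^esub> b) u = L a (L b u) \<and>
        R a (b \<otimes>\<^bsub>G\<^esub> u) = R (R a b) u \<and>
        L a (b \<otimes>\<^bsub>G\<^esub> u) = L a b \<otimes>\<^bsub>G\<^esub> L (R a b) u \<and>
        R (a \<otimes>\<^bsub>G\<^esub> b) u = R a (L b u) \<otimes>\<^bsub>G\<^esub> R b u) \<and>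
     (\<forall>u\<in>carrier G. \<forall>v\<in>carrier G. u \<otimes>\<^bsub>G\<^esub> v = L u v \<otimes>\<^bsub>G\<^esub> R u v)"

definition symset_iso ::
  "'a set \<Rightarrow> ('a \<Rightarrow> 'a \<Rightarrow> 'a) \<Rightarrow> ('a \<Rightarrow> 'a \<Rightarrow> 'a) \<Rightarrow>
   'c set \<Rightarrow> ('c \<Rightarrow> 'c \<Rightarrow> 'c) \<Rightarrow> ('c \<Rightarrow> 'c \<Rightarrow> 'c) \<Rightarrow> ('a \<Rightarrow> 'c) \<Rightarrow> bool" where
  "symset_iso X LX RX Y LY RY f \<longleftrightarrow>
     bij_betw f X Y \<and>
     (\<forall>x\<in>X. \<forall>y\<in>X. f (LX x y) = LY (f x) (f y) \<and> f (RX x y) = RY (f x) (f y))"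

definition ret_rel :: "'a set \<Rightarrow> ('a \<Rightarrow> 'a \<Rightarrow> 'a) \<Rightarrow> ('a \<times> 'a) set" where
  "ret_rel X L = {(x,y). x \<in> X \<and> y \<in> X \<and> (\<forall>z\<in>X. L x z = L y z)}"

definition ret_class :: "'a set \<Rightarrow> ('a \<Rightarrow> 'a \<Rightarrow> 'a) \<Rightarrow> 'a \<Rightarrow> 'a set" where
  "ret_class X L x = ret_rel X L `` {x}"

definition ret_carrier :: "'a set \<Rightarrow> ('a \<Rightarrow> 'a \<Rightarrow> 'a) \<Rightarrow> 'a set set" where
  "ret_carrier X L = X // ret_rel X L"

definition ret_L :: "'a set \<Rightarrow> ('a \<Rightarrow> 'a \<Rightarrow> 'a) \<Rightarrow> 'a set \<Rightarrow> 'a set \<Rightarrow> 'a set" where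
  "ret_L X L C D = ret_class X L (L (SOME x. x \<in> C) (SOME y. y \<in> D))"

definition ret_R :: "'a set \<Rightarrow> ('a \<Rightarrow> 'a \<Rightarrow> 'a) \<Rightarrow> ('a \<Rightarrow> 'a \<Rightarrow> 'a) \<Rightarrow> 'a set \<Rightarrow> 'a set \<Rightarrow> 'a set" where
  "ret_R X L R C D = ret_class X L (R (SOME x. x \<in> C) (SOME y. y \<in> D))"

definition ret_group :: "('a,'b) monoid_scheme \<Rightarrow> ('a \<Rightarrow> 'a \<Rightarrow> 'a) \<Rightarrow> 'a set monoid" where
  "ret_group G L =
     \<lparr>carrier = ret_carrier (carrier G) L,
      mult = (\<lambda>C D. ret_class (carrier G) L ((SOME x. x \<in> C) \<otimes>\<^bsub>G\<^esub> (SOME y. y \<in> D))),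
      one = ret_class (carrier G) L \<one>\<^bsub>G\<^esub>\<rparr>"

definition quot_L :: "('a,'b) monoid_scheme \<Rightarrow> 'a set \<Rightarrow> ('a \<Rightarrow> 'a \<Rightarrow> 'a) \<Rightarrow> 'a set \<Rightarrow> 'a set \<Rightarrow> 'a set" where
  "quot_L G N L C D = N #>\<^bsub>G\<^esub> L (SOME x. x \<in> C) (SOME y. y \<in> D)"

definition quot_R :: "('a,'b) monoid_scheme \<Rightarrow> 'a set \<Rightarrow> ('a \<Rightarrow> 'a \<Rightarrow> 'a) \<Rightarrow> 'a set \<Rightarrow> 'a set \<Rightarrow> 'a set" where
  "quot_R G N R C D = N #>\<^bsub>G\<^esub> R (SOME x. x \<in> C) (SOME y. y \<in> D)"

end

theory Submission
  imports Defs
begin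

lemma sg_symset:
  fixes H (structure)
  assumes sg: "symmetric_group H L R"
  shows "symmetric_set (carrier H) L R"
proof -
  interpret group H using sg by (simp add: symmetric_group_def)
  have inv: "involutive_on (carrier H) L R" using sg by (simp add: symmetric_group_def)
  have Lc: "\<And>a b. a \<in> carrier H \<Longrightarrow> b \<in> carrier H \<Longrightarrow> L a b \<in> carrier H"
   and Rc: "\<And>a b. a \<in> carrier H \<Longrightarrow> b \<in> carrier H \<Longrightarrow> R a b \<in> carrier H"
    using inv by (auto simp: involutive_on_def)
  have ax: "\<And>a b u. a \<in> carrier H \<Longrightarrow> b \<in> carrier H \<Longrightarrow> u \<in> carrier H \<Longrightarrow>
        L (a \<otimes> b) u = L a (L b u) \<and>
        R a (b \<otimes> u) = R (R a b) u"
    and un: "\<And>a. a \<in> carrier H \<Longrightarrow> L \<one> a = a \<and> R a \<one> = a"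
    and dec: "\<And>u v. u\<in>carrier H \<Longrightarrow> v\<in>carrier H \<Longrightarrow> u \<otimes> v = L u v \<otimes> R u v"
    using sg by (auto simp: symmetric_group_def)
  have bL: "bij_betw (L x) (carrier H) (carrier H)" if x: "x \<in> carrier H" for x
  proof (rule bij_betw_byWitness[where f'="L (inv x)"])
    show "\<forall>a\<in>carrier H. L (inv x) (L x a) = a"
    proof
      fix a assume a: "a \<in> carrier H"
      have "L (inv x) (L x a) = L (inv x \<otimes> x) a" using ax[of "inv x" x a] x a by simp
      then show "L (inv x) (L x a) = a" using un a x by simp
    qed
    show "\<forall>a\<in>carrier H. L x (L (inv x) a) = a"
    proof
      fix a assume a: "a \<in> carrier H"
      have "L x (L (inv x) a) = L (x \<otimes> inv x) a" using ax[of x "inv x" a] x a by simp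
      then show "L x (L (inv x) a) = a" using un a x by simp
    qed
  qed (use x Lc in auto)
  have bR: "bij_betw (\<lambda>a. R a y) (carrier H) (carrier H)" if y: "y \<in> carrier H" for y
  proof (rule bij_betw_byWitness[where f'="\<lambda>a. R a (inv y)"])
    show "\<forall>a\<in>carrier H. R (R a y) (inv y) = a"
    proof
      fix a assume a: "a \<in> carrier H"
      have "R (R a y) (inv y) = R a (y \<otimes> inv y)" using ax[of a y "inv y"] y a by simp
      then show "R (R a y) (inv y) = a" using un a y by simp
    qed
    show "\<forall>a\<in>carrier H. R (R a (inv y)) y = a"
    proof
      fix a assume a: "a \<in> carrier H"
      have "R (R a (inv y)) y = R a (inv y \<otimes> y)" using ax[of a "inv y" y] y a by simp
      then show "R (R a (inv y)) y = a" using un a y by simp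
    qed
  qed (use y Rc in auto)
  have ybe: "L (L x y) (L (R x y) z) = L x (L y z) \<and>
             R (L x y) (L (R x y) z) = L (R x (L y z)) (R y z) \<and>
             R (R x y) z = R (R x (L y z)) (R y z)"
    if xyz: "x \<in> carrier H" "y \<in> carrier H" "z \<in> carrier H" for x y z
  proof -
    note cl = Lc Rc m_closed
    have Lxy: "L x y \<in> carrier H" "R x y \<in> carrier H" "L y z \<in> carrier H" "R y z \<in> carrier H"
      using xyz cl by auto
    have Lxyz: "L (R x y) z \<in> carrier H" "R (R x y) z \<in> carrier H"
       "R x (L y z) \<in> carrier H" "L x (L y z) \<in> carrier H"
      using xyz Lxy cl by auto
    have Lxyz2: "L (L x y) (L (R x y) z) \<in> carrier H" "R (L x y) (L (R x y) z) \<in> carrier H"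
      "L (R x (L y z)) (R y z) \<in> carrier H" "R (R x (L y z)) (R y z) \<in> carrier H"
      using Lxy Lxyz cl by auto
    have e1: "L (L x y) (L (R x y) z) = L x (L y z)"
    proof -
      have "L x (L y z) = L (x \<otimes> y) z" using ax[of x y z] xyz by simp
      also have "\<dots> = L (L x y \<otimes> R x y) z" using dec[of x y] xyz by simp
      also have "\<dots> = L (L x y) (L (R x y) z)" using ax[of "L x y" "R x y" z] xyz Lxy by simp
      finally show ?thesis by simp
    qed
    have e3: "R (R x y) z = R (R x (L y z)) (R y z)"
    proof -
      have "R (R x (L y z)) (R y z) = R x (L y z \<otimes> R y z)" using ax[of x "L y z" "R y z"] xyz Lxy by simp
      also have "\<dots> = R x (y \<otimes> z)" using dec[of y z] xyz by simp
      also have "\<dots> = R (R x y) z" using ax[of x y z] xyz by simp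
      finally show ?thesis by simp
    qed
    have p1: "L (L x y) (L (R x y) z) \<otimes> R (L x y) (L (R x y) z) \<otimes> R (R x y) z = x \<otimes> y \<otimes> z"
    proof -
      have "L (L x y) (L (R x y) z) \<otimes> R (L x y) (L (R x y) z) \<otimes> R (R x y) z
          = (L x y \<otimes> L (R x y) z) \<otimes> R (R x y) z"
        using dec[of "L x y" "L (R x y) z"] Lxy Lxyz by simp
      also have "\<dots> = L x y \<otimes> (L (R x y) z \<otimes> R (R x y) z)" using Lxy Lxyz m_assoc by simp
      also have "\<dots> = L x y \<otimes> (R x y \<otimes> z)" using dec[of "R x y" z] xyz Lxy by simp
      also have "\<dots> = (L x y \<otimes> R x y) \<otimes> z" using xyz Lxy m_assoc by simp
      also have "\<dots> = x \<otimes> y \<otimes> z" using dec[of x y] xyz by simp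
      finally show ?thesis .
    qed
    have p2: "L x (L y z) \<otimes> L (R x (L y z)) (R y z) \<otimes> R (R x (L y z)) (R y z) = x \<otimes> y \<otimes> z"
    proof -
      have "L x (L y z) \<otimes> L (R x (L y z)) (R y z) \<otimes> R (R x (L y z)) (R y z)
          = L x (L y z) \<otimes> (L (R x (L y z)) (R y z) \<otimes> R (R x (L y z)) (R y z))"
        using Lxyz Lxyz2 m_assoc by simp
      also have "\<dots> = L x (L y z) \<otimes> (R x (L y z) \<otimes> R y z)"
        using dec[of "R x (L y z)" "R y z"] Lxy Lxyz by simp
      also have "\<dots> = (L x (L y z) \<otimes> R x (L y z)) \<otimes> R y z" using Lxy Lxyz m_assoc by simp
      also have "\<dots> = x \<otimes> (L y z \<otimes> R y z)" using dec[of x "L y z", symmetric] xyz Lxy m_assoc by simp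
      also have "\<dots> = x \<otimes> y \<otimes> z" using dec[of y z] xyz m_assoc by simp
      finally show ?thesis .
    qed
    have "(L (L x y) (L (R x y) z) \<otimes> R (L x y) (L (R x y) z)) \<otimes> R (R x y) z =
          (L x (L y z) \<otimes> L (R x (L y z)) (R y z)) \<otimes> R (R x y) z"
      using p1 p2 e3 by simp
    then have "L (L x y) (L (R x y) z) \<otimes> R (L x y) (L (R x y) z) =
          L x (L y z) \<otimes> L (R x (L y z)) (R y z)"
      using Lxyz Lxyz2 right_cancel by simp
    then have "R (L x y) (L (R x y) z) = L (R x (L y z)) (R y z)"
      using e1 Lxyz Lxyz2 by simp
    with e1 e3 show ?thesis by simp
  qed
  have "\<forall>x\<in>carrier H. \<forall>y\<in>carrier H. \<forall>z\<in>carrier H.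
        (let r1 = (\<lambda>(a,b,c). (L a b, R a b, c));
             r2 = (\<lambda>(a,b,c). (a, L b c, R b c))
         in r1 (r2 (r1 (x,y,z))) = r2 (r1 (r2 (x,y,z))))"
  proof (intro ballI)
    fix x y z assume "x \<in> carrier H" "y \<in> carrier H" "z \<in> carrier H"
    from ybe[OF this] show "let r1 = (\<lambda>(a,b,c). (L a b, R a b, c));
             r2 = (\<lambda>(a,b,c). (a, L b c, R b c))
         in r1 (r2 (r1 (x,y,z))) = r2 (r1 (r2 (x,y,z)))" unfolding Let_def by simp
  qed
  then show ?thesis unfolding symmetric_set_def using inv bL bR by blast
qed

lemma sg_transfer:
  fixes H (structure)
  assumes sg: "symmetric_group H L R"
    and c: "carrier H' = carrier H" and o: "one H' = one H"
    and m: "\<And>x y. x \<in> carrier H \<Longrightarrow> y \<in> carrier H \<Longrightarrow> mult H' x y = mult H x y"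
    and l: "\<And>x y. x \<in> carrier H \<Longrightarrow> y \<in> carrier H \<Longrightarrow> L' x y = L x y"
    and r: "\<And>x y. x \<in> carrier H \<Longrightarrow> y \<in> carrier H \<Longrightarrow> R' x y = R x y"
  shows "symmetric_group H' L' R'"
proof -
  interpret group H using sg by (simp add: symmetric_group_def)
  have inv: "involutive_on (carrier H) L R" using sg by (simp add: symmetric_group_def)
  have Lc: "\<And>a b. a \<in> carrier H \<Longrightarrow> b \<in> carrier H \<Longrightarrow> L a b \<in> carrier H"
   and Rc: "\<And>a b. a \<in> carrier H \<Longrightarrow> b \<in> carrier H \<Longrightarrow> R a b \<in> carrier H"
    using inv by (auto simp: involutive_on_def)
  have ax: "\<And>a b u. a \<in> carrier H \<Longrightarrow> b \<in> carrier H \<Longrightarrow> u \<in> carrier H \<Longrightarrow>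
        L (a \<otimes> b) u = L a (L b u) \<and>
        R a (b \<otimes> u) = R (R a b) u \<and>
        L a (b \<otimes> u) = L a b \<otimes> L (R a b) u \<and>
        R (a \<otimes> b) u = R a (L b u) \<otimes> R b u"
    and un: "\<And>a. a \<in> carrier H \<Longrightarrow> L a \<one> = \<one> \<and> L \<one> a = a \<and> R \<one> a = \<one> \<and> R a \<one> = a"
    and dec: "\<And>u v. u\<in>carrier H \<Longrightarrow> v\<in>carrier H \<Longrightarrow> u \<otimes> v = L u v \<otimes> R u v"
    using sg unfolding symmetric_group_def by blast+
  have "group H'"
  proof (rule groupI)
    show "\<And>x y. x \<in> carrier H' \<Longrightarrow> y \<in> carrier H' \<Longrightarrow> x \<otimes>\<^bsub>H'\<^esub> y \<in> carrier H'"
      using c m by simp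
    show "\<one>\<^bsub>H'\<^esub> \<in> carrier H'" using c o by simp
    show "\<And>x y z. x \<in> carrier H' \<Longrightarrow> y \<in> carrier H' \<Longrightarrow> z \<in> carrier H' \<Longrightarrow>
      x \<otimes>\<^bsub>H'\<^esub> y \<otimes>\<^bsub>H'\<^esub> z = x \<otimes>\<^bsub>H'\<^esub> (y \<otimes>\<^bsub>H'\<^esub> z)"
      using c m by (simp add: m_assoc)
    show "\<And>x. x \<in> carrier H' \<Longrightarrow> \<one>\<^bsub>H'\<^esub> \<otimes>\<^bsub>H'\<^esub> x = x" using c m o by simp
    show "\<And>x. x \<in> carrier H' \<Longrightarrow> \<exists>y\<in>carrier H'. y \<otimes>\<^bsub>H'\<^esub> x = \<one>\<^bsub>H'\<^esub>"
      using c m o by (metis inv_closed l_inv)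
  qed
  moreover have "involutive_on (carrier H') L' R'"
    using inv c l r Lc Rc by (simp add: involutive_on_def)
  moreover have "\<forall>a\<in>carrier H'. L' a \<one>\<^bsub>H'\<^esub> = \<one>\<^bsub>H'\<^esub> \<and> L' \<one>\<^bsub>H'\<^esub> a = a \<and>
                     R' \<one>\<^bsub>H'\<^esub> a = \<one>\<^bsub>H'\<^esub> \<and> R' a \<one>\<^bsub>H'\<^esub> = a"
    using un c o l r by simp
  moreover have "\<forall>a\<in>carrier H'. \<forall>b\<in>carrier H'. \<forall>u\<in>carrier H'.
        L' (a \<otimes>\<^bsub>H'\<^esub> b) u = L' a (L' b u) \<and>
        R' a (b \<otimes>\<^bsub>H'\<^esub> u) = R' (R' a b) u \<and>
        L' a (b \<otimes>\<^bsub>H'\<^esub> u) = L' a b \<otimes>\<^bsub>H'\<^esub> L' (R' a b) u \<and>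
        R' (a \<otimes>\<^bsub>H'\<^esub> b) u = R' a (L' b u) \<otimes>\<^bsub>H'\<^esub> R' b u"
  proof (intro ballI)
    fix a b u assume "a \<in> carrier H'" "b \<in> carrier H'" "u \<in> carrier H'"
    then have abu: "a \<in> carrier H" "b \<in> carrier H" "u \<in> carrier H" using c by auto
    show "L' (a \<otimes>\<^bsub>H'\<^esub> b) u = L' a (L' b u) \<and>
        R' a (b \<otimes>\<^bsub>H'\<^esub> u) = R' (R' a b) u \<and>
        L' a (b \<otimes>\<^bsub>H'\<^esub> u) = L' a b \<otimes>\<^bsub>H'\<^esub> L' (R' a b) u \<and>
        R' (a \<otimes>\<^bsub>H'\<^esub> b) u = R' a (L' b u) \<otimes>\<^bsub>H'\<^esub> R' b u"
      using ax[OF abu] abu m l r Lc Rc by simp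
  qed
  moreover have "\<forall>u\<in>carrier H'. \<forall>v\<in>carrier H'. u \<otimes>\<^bsub>H'\<^esub> v = L' u v \<otimes>\<^bsub>H'\<^esub> R' u v"
  proof (intro ballI)
    fix u v assume "u \<in> carrier H'" "v \<in> carrier H'"
    then have uv: "u \<in> carrier H" "v \<in> carrier H" using c by auto
    show "u \<otimes>\<^bsub>H'\<^esub> v = L' u v \<otimes>\<^bsub>H'\<^esub> R' u v"
      using dec[OF uv] uv m l r Lc Rc by simp
  qed
  ultimately show ?thesis unfolding symmetric_group_def by blast
qed


locale symgrp = group G for G (structure) +
  fixes L R :: "'a \<Rightarrow> 'a \<Rightarrow> 'a"
  assumes sg: "symmetric_group G L R"
begin

lemma cancel1 [simp]: "x \<in> carrier G \<Longrightarrow> y \<in> carrier G \<Longrightarrow> inv x \<otimes> (x \<otimes> y) = y"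
  by (simp add: m_assoc[symmetric])
lemma cancel2 [simp]: "x \<in> carrier G \<Longrightarrow> y \<in> carrier G \<Longrightarrow> x \<otimes> (inv x \<otimes> y) = y"
  by (simp add: m_assoc[symmetric])

abbreviation "Gam \<equiv> {a \<in> carrier G. \<forall>u\<in>carrier G. L a u = u}"

lemma Lc: "a \<in> carrier G \<Longrightarrow> b \<in> carrier G \<Longrightarrow> L a b \<in> carrier G"
  and Rc: "a \<in> carrier G \<Longrightarrow> b \<in> carrier G \<Longrightarrow> R a b \<in> carrier G"
  and invL: "a \<in> carrier G \<Longrightarrow> b \<in> carrier G \<Longrightarrow> L (L a b) (R a b) = a"
  and invR: "a \<in> carrier G \<Longrightarrow> b \<in> carrier G \<Longrightarrow> R (L a b) (R a b) = b"
  using sg unfolding symmetric_group_def involutive_on_def by auto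

lemma un: "a \<in> carrier G \<Longrightarrow> L a \<one> = \<one> \<and> L \<one> a = a \<and> R \<one> a = \<one> \<and> R a \<one> = a"
  using sg unfolding symmetric_group_def by blast

lemma ax: "a \<in> carrier G \<Longrightarrow> b \<in> carrier G \<Longrightarrow> u \<in> carrier G \<Longrightarrow>
        L (a \<otimes> b) u = L a (L b u) \<and>
        R a (b \<otimes> u) = R (R a b) u \<and>
        L a (b \<otimes> u) = L a b \<otimes> L (R a b) u \<and>
        R (a \<otimes> b) u = R a (L b u) \<otimes> R b u"
  using sg unfolding symmetric_group_def by blast

lemma dec: "u\<in>carrier G \<Longrightarrow> v\<in>carrier G \<Longrightarrow> u \<otimes> v = L u v \<otimes> R u v"
  using sg unfolding symmetric_group_def by blast

lemma L1: "a \<in> carrier G \<Longrightarrow> b \<in> carrier G \<Longrightarrow> u \<in> carrier G \<Longrightarrow> L (a \<otimes> b) u = L a (L b u)"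
  and R1: "a \<in> carrier G \<Longrightarrow> b \<in> carrier G \<Longrightarrow> u \<in> carrier G \<Longrightarrow> R a (b \<otimes> u) = R (R a b) u"
  and L2: "a \<in> carrier G \<Longrightarrow> b \<in> carrier G \<Longrightarrow> u \<in> carrier G \<Longrightarrow> L a (b \<otimes> u) = L a b \<otimes> L (R a b) u"
  and R2: "a \<in> carrier G \<Longrightarrow> b \<in> carrier G \<Longrightarrow> u \<in> carrier G \<Longrightarrow> R (a \<otimes> b) u = R a (L b u) \<otimes> R b u"
  using ax by blast+

lemma G1: assumes a: "a \<in> Gam" and b: "b \<in> carrier G" shows "R a b \<in> Gam"
proof -
  have ac: "a \<in> carrier G" using a by simp
  have "L (R a b) u = u" if u: "u \<in> carrier G" for u
  proof -
    have "b \<otimes> u = L a (b \<otimes> u)" using a b u by simp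
    also have "\<dots> = L a b \<otimes> L (R a b) u" using L2[OF ac b u] .
    also have "\<dots> = b \<otimes> L (R a b) u" using a b by simp
    finally show ?thesis using b u Lc Rc ac by simp
  qed
  then show ?thesis using Rc ac b by simp
qed

lemma G2: assumes a: "a \<in> Gam" and b: "b \<in> carrier G" shows "R a b = inv b \<otimes> a \<otimes> b"
proof -
  have ac: "a \<in> carrier G" using a by simp
  have e: "a \<otimes> b = b \<otimes> R a b" using dec[OF ac b] a b by simp
  have "inv b \<otimes> a \<otimes> b = inv b \<otimes> (b \<otimes> R a b)" using e ac b m_assoc by simp
  also have "\<dots> = R a b" using b ac Rc by (simp add: m_assoc[symmetric])
  finally show ?thesis by simp
qed

lemma conj1: assumes "a \<in> Gam" "b \<in> carrier G" shows "inv b \<otimes> a \<otimes> b \<in> Gam"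
  using G1[OF assms] unfolding G2[OF assms] .

lemma conj2: assumes "a \<in> Gam" "b \<in> carrier G" shows "b \<otimes> a \<otimes> inv b \<in> Gam"
  using conj1[OF assms(1), of "inv b"] assms(2) by simp

lemma G3: assumes c: "c \<in> Gam" and b: "b \<in> carrier G" shows "R b c = b"
proof -
  have cc: "c \<in> carrier G" using c by simp
  define a where "a = b \<otimes> c \<otimes> inv b"
  have a: "a \<in> Gam" unfolding a_def using conj2[OF c b] .
  have ac: "a \<in> carrier G" using a by simp
  have "R a b = inv b \<otimes> a \<otimes> b" using G2[OF a b] .
  also have "\<dots> = c" unfolding a_def using b cc by (simp add: m_assoc)
  finally have r: "R a b = c" .
  have l: "L a b = b" using a b by simp
  show ?thesis using invR[OF ac b] r l by simp
qed

lemma H1: assumes a: "a \<in> carrier G" "\<forall>u\<in>carrier G. R u a = u" and u: "u \<in> carrier G"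
  shows "\<forall>b\<in>carrier G. R b (L u a) = b"
proof
  fix b assume b: "b \<in> carrier G"
  have "b \<otimes> u = R (b \<otimes> u) a" using a b u by simp
  also have "\<dots> = R b (L u a) \<otimes> R u a" using R2[OF b u a(1)] .
  also have "\<dots> = R b (L u a) \<otimes> u" using a u by simp
  finally show "R b (L u a) = b" using b u Rc Lc a by simp
qed

lemma H2: assumes a: "a \<in> carrier G" "\<forall>u\<in>carrier G. R u a = u" and u: "u \<in> carrier G"
  shows "L u a = u \<otimes> a \<otimes> inv u"
proof -
  have e: "u \<otimes> a = L u a \<otimes> u" using dec[OF u a(1)] a u by simp
  have "u \<otimes> a \<otimes> inv u = L u a \<otimes> u \<otimes> inv u" using e by simp
  also have "\<dots> = L u a" using u a Lc by (simp add: m_assoc)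
  finally show ?thesis by simp
qed

lemma G4: assumes c: "c \<in> carrier G" "\<forall>u\<in>carrier G. R u c = u" and b: "b \<in> carrier G"
  shows "L c b = b"
proof -
  define a where "a = inv b \<otimes> c \<otimes> b"
  have ac: "a \<in> carrier G" unfolding a_def using c b by simp
  have "L (inv b) c = inv b \<otimes> c \<otimes> inv (inv b)" using H2[OF c, of "inv b"] b by simp
  then have "L (inv b) c = a" unfolding a_def using b by simp
  then have ar: "\<forall>u\<in>carrier G. R u a = u" using H1[OF c, of "inv b"] b by simp
  have l: "L b a = c" using H2[OF ac ar b] unfolding a_def using b c by (simp add: m_assoc)
  have r: "R b a = b" using ar b by simp
  show ?thesis using invL[OF b ac] l r by simp
qed

lemma Gam_eq: "Gam = {a \<in> carrier G. \<forall>u\<in>carrier G. R u a = u}"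
proof (intro equalityI subsetI)
  fix a assume a: "a \<in> Gam"
  then show "a \<in> {a \<in> carrier G. \<forall>u\<in>carrier G. R u a = u}" using G3[OF a] by blast
next
  fix a assume a: "a \<in> {a \<in> carrier G. \<forall>u\<in>carrier G. R u a = u}"
  then have "a \<in> carrier G" "\<forall>u\<in>carrier G. R u a = u" by auto
  then show "a \<in> Gam" using G4 by blast
qed

lemma L_Gam: assumes c: "c \<in> Gam" and b: "b \<in> carrier G" shows "L b c = b \<otimes> c \<otimes> inv b"
  using H2[of c b] c b Gam_eq by auto

lemma L_Gam_in: assumes "c \<in> Gam" "b \<in> carrier G" shows "L b c \<in> Gam"
  unfolding L_Gam[OF assms] using conj2[OF assms] .

lemma Gam_sub: "subgroup Gam G"
proof (rule subgroupI)
  show "Gam \<subseteq> carrier G" by auto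
  show "Gam \<noteq> {}" using un by auto
  show "inv a \<in> Gam" if a: "a \<in> Gam" for a
  proof -
    have "L (inv a) u = u" if u: "u \<in> carrier G" for u
    proof -
      have "L (inv a) u = L (inv a) (L a u)" using a u by simp
      also have "\<dots> = L (inv a \<otimes> a) u" using L1[of "inv a" a u] a u by simp
      finally show ?thesis using a u un by simp
    qed
    then show ?thesis using a by simp
  qed
  show "a \<otimes> b \<in> Gam" if "a \<in> Gam" "b \<in> Gam" for a b
    using that L1 by simp
qed

lemma Gam_normal: "Gam \<lhd> G"
  unfolding normal_inv_iff using Gam_sub conj2 by blast

lemma Gam_comm: assumes x: "x \<in> Gam" and y: "y \<in> Gam" shows "x \<otimes> y = y \<otimes> x"
proof -
  have xc: "x \<in> carrier G" "y \<in> carrier G" using x y by auto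
  have "x \<otimes> y = L x y \<otimes> R x y" using dec[OF xc] .
  then show ?thesis using x y G3 by simp
qed

lemma coset_absorb: "k \<in> Gam \<Longrightarrow> z \<in> carrier G \<Longrightarrow> Gam #> (k \<otimes> z) = Gam #> z"
  using coset_mult_assoc[of Gam k z] subgroup.rcos_const[OF Gam_sub is_group, of k] by auto

lemma in_coset: "x \<in> Gam #> a \<Longrightarrow> \<exists>g\<in>Gam. x = g \<otimes> a"
  unfolding r_coset_def by auto

lemma qL0: assumes a: "a \<in> carrier G" and b: "b \<in> carrier G" and x: "x \<in> Gam #> a" and y: "y \<in> Gam #> b"
  shows "Gam #> L x y = Gam #> L a b"
proof -
  obtain g where g: "g \<in> Gam" "x = g \<otimes> a" using in_coset[OF x] by blast
  obtain h where h: "h \<in> Gam" "y = h \<otimes> b" using in_coset[OF y] by blast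
  have gc: "g \<in> carrier G" "h \<in> carrier G" using g h by auto
  have "L x y = L g (L a (h \<otimes> b))" using L1 g h gc a b by simp
  also have "\<dots> = L a (h \<otimes> b)" using g a b gc Lc by simp
  also have "\<dots> = L a h \<otimes> L (R a h) b" using L2 a b gc by simp
  also have "\<dots> = L a h \<otimes> L a b" using G3[OF h(1) a] by simp
  finally have "L x y = L a h \<otimes> L a b" .
  then show ?thesis using coset_absorb[OF L_Gam_in[OF h(1) a]] Lc a b by simp
qed

lemma qR0: assumes a: "a \<in> carrier G" and b: "b \<in> carrier G" and x: "x \<in> Gam #> a" and y: "y \<in> Gam #> b"
  shows "Gam #> R x y = Gam #> R a b"
proof -
  obtain g where g: "g \<in> Gam" "x = g \<otimes> a" using in_coset[OF x] by blast
  obtain h where h: "h \<in> Gam" "y = h \<otimes> b" using in_coset[OF y] by blast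
  have gc: "g \<in> carrier G" "h \<in> carrier G" using g h by auto
  have "R x y = R (R (g \<otimes> a) h) b" using R1 g h gc a b by simp
  also have "\<dots> = R (g \<otimes> a) b" using G3[OF h(1)] gc a by simp
  also have "\<dots> = R g (L a b) \<otimes> R a b" using R2 a b gc by simp
  finally have "R x y = R g (L a b) \<otimes> R a b" .
  then show ?thesis using coset_absorb[OF G1[OF g(1) Lc[OF a b]]] Rc a b by simp
qed

lemma some_coset: "a \<in> carrier G \<Longrightarrow> (SOME x. x \<in> Gam #> a) \<in> Gam #> a"
  using rcos_self[OF _ Gam_sub] by (meson someI_ex)

lemma qL: "a \<in> carrier G \<Longrightarrow> b \<in> carrier G \<Longrightarrow> quot_L G Gam L (Gam #> a) (Gam #> b) = Gam #> L a b"
  unfolding quot_L_def using qL0 some_coset by blast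

lemma qR: "a \<in> carrier G \<Longrightarrow> b \<in> carrier G \<Longrightarrow> quot_R G Gam R (Gam #> a) (Gam #> b) = Gam #> R a b"
  unfolding quot_R_def using qR0 some_coset by blast

lemma Gam_sub_car [simp]: "Gam \<subseteq> carrier G" by auto

lemma one_eq: "Gam #> \<one> = Gam" by simp

lemma mem_fact: "a \<in> carrier G \<Longrightarrow> Gam #> a \<in> carrier (G Mod Gam)"
  unfolding carrier_FactGroup by simp

lemma fact_cases: "C \<in> carrier (G Mod Gam) \<Longrightarrow> \<exists>a\<in>carrier G. C = Gam #> a"
  unfolding carrier_FactGroup by auto

lemma msum: "a \<in> carrier G \<Longrightarrow> b \<in> carrier G \<Longrightarrow> (Gam #> a) <#> (Gam #> b) = Gam #> (a \<otimes> b)"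
  using normal.rcos_sum[OF Gam_normal] by simp

lemma allF: "(\<And>a. a \<in> carrier G \<Longrightarrow> P (Gam #> a)) \<Longrightarrow> \<forall>C\<in>carrier (G Mod Gam). P C"
  using fact_cases by blast

lemma fact_sg: "symmetric_group (G Mod Gam) (quot_L G Gam L) (quot_R G Gam R)"
proof -
  have grp: "group (G Mod Gam)" using normal.factorgroup_is_group[OF Gam_normal] .
  have inv: "involutive_on (carrier (G Mod Gam)) (quot_L G Gam L) (quot_R G Gam R)"
    unfolding involutive_on_def
  proof (intro conjI)
    show "\<forall>x\<in>carrier (G Mod Gam). \<forall>y\<in>carrier (G Mod Gam).
      quot_L G Gam L x y \<in> carrier (G Mod Gam) \<and> quot_R G Gam R x y \<in> carrier (G Mod Gam)"
      by (intro allF) (simp add: qL qR Lc Rc mem_fact)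
    show "\<forall>x\<in>carrier (G Mod Gam). \<forall>y\<in>carrier (G Mod Gam).
      quot_L G Gam L (quot_L G Gam L x y) (quot_R G Gam R x y) = x \<and>
      quot_R G Gam R (quot_L G Gam L x y) (quot_R G Gam R x y) = y"
      by (intro allF) (simp add: qL qR Lc Rc invL invR)
  qed
  have units: "\<forall>a\<in>carrier (G Mod Gam).
     quot_L G Gam L a \<one>\<^bsub>G Mod Gam\<^esub> = \<one>\<^bsub>G Mod Gam\<^esub> \<and> quot_L G Gam L \<one>\<^bsub>G Mod Gam\<^esub> a = a \<and>
     quot_R G Gam R \<one>\<^bsub>G Mod Gam\<^esub> a = \<one>\<^bsub>G Mod Gam\<^esub> \<and> quot_R G Gam R a \<one>\<^bsub>G Mod Gam\<^esub> = a"
  proof (intro allF)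
    fix a assume a: "a \<in> carrier G"
    have u: "L a \<one> = \<one>" "L \<one> a = a" "R \<one> a = \<one>" "R a \<one> = a" using un[OF a] by auto
    show "quot_L G Gam L (Gam #> a) \<one>\<^bsub>G Mod Gam\<^esub> = \<one>\<^bsub>G Mod Gam\<^esub> \<and>
      quot_L G Gam L \<one>\<^bsub>G Mod Gam\<^esub> (Gam #> a) = Gam #> a \<and>
      quot_R G Gam R \<one>\<^bsub>G Mod Gam\<^esub> (Gam #> a) = \<one>\<^bsub>G Mod Gam\<^esub> \<and>
      quot_R G Gam R (Gam #> a) \<one>\<^bsub>G Mod Gam\<^esub> = Gam #> a"
      using qL[OF a one_closed] qL[OF one_closed a] qR[OF a one_closed] qR[OF one_closed a] u
      by simp
  qed
  have axs: "\<forall>a\<in>carrier (G Mod Gam). \<forall>b\<in>carrier (G Mod Gam). \<forall>u\<in>carrier (G Mod Gam).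
        quot_L G Gam L (a \<otimes>\<^bsub>G Mod Gam\<^esub> b) u = quot_L G Gam L a (quot_L G Gam L b u) \<and>
        quot_R G Gam R a (b \<otimes>\<^bsub>G Mod Gam\<^esub> u) = quot_R G Gam R (quot_R G Gam R a b) u \<and>
        quot_L G Gam L a (b \<otimes>\<^bsub>G Mod Gam\<^esub> u) = quot_L G Gam L a b \<otimes>\<^bsub>G Mod Gam\<^esub> quot_L G Gam L (quot_R G Gam R a b) u \<and>
        quot_R G Gam R (a \<otimes>\<^bsub>G Mod Gam\<^esub> b) u = quot_R G Gam R a (quot_L G Gam L b u) \<otimes>\<^bsub>G Mod Gam\<^esub> quot_R G Gam R b u"
  proof (intro allF)
    fix a b u assume abu: "a \<in> carrier G" "b \<in> carrier G" "u \<in> carrier G"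
    have e: "L (a \<otimes> b) u = L a (L b u)" "R a (b \<otimes> u) = R (R a b) u"
        "L a (b \<otimes> u) = L a b \<otimes> L (R a b) u" "R (a \<otimes> b) u = R a (L b u) \<otimes> R b u"
      using ax[OF abu] by auto
    show "quot_L G Gam L ((Gam #> a) \<otimes>\<^bsub>G Mod Gam\<^esub> (Gam #> b)) (Gam #> u) = quot_L G Gam L (Gam #> a) (quot_L G Gam L (Gam #> b) (Gam #> u)) \<and>
        quot_R G Gam R (Gam #> a) ((Gam #> b) \<otimes>\<^bsub>G Mod Gam\<^esub> (Gam #> u)) = quot_R G Gam R (quot_R G Gam R (Gam #> a) (Gam #> b)) (Gam #> u) \<and>
        quot_L G Gam L (Gam #> a) ((Gam #> b) \<otimes>\<^bsub>G Mod Gam\<^esub> (Gam #> u)) = quot_L G Gam L (Gam #> a) (Gam #> b) \<otimes>\<^bsub>G Mod Gam\<^esub> quot_L G Gam L (quot_R G Gam R (Gam #> a) (Gam #> b)) (Gam #> u) \<and>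
        quot_R G Gam R ((Gam #> a) \<otimes>\<^bsub>G Mod Gam\<^esub> (Gam #> b)) (Gam #> u) = quot_R G Gam R (Gam #> a) (quot_L G Gam L (Gam #> b) (Gam #> u)) \<otimes>\<^bsub>G Mod Gam\<^esub> quot_R G Gam R (Gam #> b) (Gam #> u)"
      using abu e by (simp add: msum qL qR Lc Rc)
  qed
  have decs: "\<forall>u\<in>carrier (G Mod Gam). \<forall>v\<in>carrier (G Mod Gam).
      u \<otimes>\<^bsub>G Mod Gam\<^esub> v = quot_L G Gam L u v \<otimes>\<^bsub>G Mod Gam\<^esub> quot_R G Gam R u v"
  proof (intro allF)
    fix u v assume uv: "u \<in> carrier G" "v \<in> carrier G"
    show "(Gam #> u) \<otimes>\<^bsub>G Mod Gam\<^esub> (Gam #> v) = quot_L G Gam L (Gam #> u) (Gam #> v) \<otimes>\<^bsub>G Mod Gam\<^esub> quot_R G Gam R (Gam #> u) (Gam #> v)"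
      using uv dec[OF uv] by (simp add: msum qL qR Lc Rc)
  qed
  show ?thesis unfolding symmetric_group_def using grp inv units axs decs by blast
qed

lemma ret_class_eq: assumes x: "x \<in> carrier G" shows "ret_class (carrier G) L x = Gam #> x"
proof (intro equalityI subsetI)
  fix y assume "y \<in> ret_class (carrier G) L x"
  then have y: "y \<in> carrier G" and lz: "\<forall>z\<in>carrier G. L x z = L y z"
    unfolding ret_class_def ret_rel_def by auto
  define g where "g = y \<otimes> inv x"
  have gc: "g \<in> carrier G" unfolding g_def using x y by simp
  have "L g z = z" if z: "z \<in> carrier G" for z
  proof -
    have "L g z = L y (L (inv x) z)" unfolding g_def using L1 x y z by simp
    also have "\<dots> = L x (L (inv x) z)" using lz x z Lc by simp
    also have "\<dots> = z" using L1[of x "inv x" z, symmetric] x z un by simp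
    finally show ?thesis .
  qed
  then have g: "g \<in> Gam" using gc by simp
  have "y = g \<otimes> x" unfolding g_def using x y by (simp add: m_assoc)
  then show "y \<in> Gam #> x" using g unfolding r_coset_def by auto
next
  fix y assume "y \<in> Gam #> x"
  then obtain g where g: "g \<in> Gam" "y = g \<otimes> x" using in_coset by blast
  then have "\<forall>z\<in>carrier G. L x z = L y z" using L1 x Lc by simp
  moreover have "y \<in> carrier G" using g x by simp
  ultimately show "y \<in> ret_class (carrier G) L x"
    unfolding ret_class_def ret_rel_def using x by auto
qed

lemma ret_carrier_eq: "ret_carrier (carrier G) L = carrier (G Mod Gam)"
proof -
  have "ret_carrier (carrier G) L = (\<lambda>x. ret_class (carrier G) L x) ` carrier G"
    unfolding ret_carrier_def quotient_def ret_class_def by auto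
  also have "\<dots> = (\<lambda>x. Gam #> x) ` carrier G" using ret_class_eq by auto
  finally show ?thesis unfolding carrier_FactGroup .
qed

lemma some_in: assumes C: "C \<in> carrier (G Mod Gam)"
  shows "(SOME x. x \<in> C) \<in> carrier G" "C = Gam #> (SOME x. x \<in> C)"
proof -
  obtain a where a: "a \<in> carrier G" "C = Gam #> a" using fact_cases[OF C] by blast
  have s: "(SOME x. x \<in> C) \<in> Gam #> a" using some_coset[OF a(1)] a(2) by simp
  then show "(SOME x. x \<in> C) \<in> carrier G" using a(1) r_coset_subset_G[of Gam a] by auto
  show "C = Gam #> (SOME x. x \<in> C)" using repr_independence[OF s a(1) Gam_sub] a(2) by simp
qed

lemma retL_eq: "C \<in> carrier (G Mod Gam) \<Longrightarrow> D \<in> carrier (G Mod Gam) \<Longrightarrow>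
   ret_L (carrier G) L C D = quot_L G Gam L C D"
  unfolding ret_L_def quot_L_def using some_in ret_class_eq Lc by simp

lemma retR_eq: "C \<in> carrier (G Mod Gam) \<Longrightarrow> D \<in> carrier (G Mod Gam) \<Longrightarrow>
   ret_R (carrier G) L R C D = quot_R G Gam R C D"
  unfolding ret_R_def quot_R_def using some_in ret_class_eq Rc by simp

lemma ret_mult: assumes C: "C \<in> carrier (G Mod Gam)" and D: "D \<in> carrier (G Mod Gam)"
  shows "mult (ret_group G L) C D = C \<otimes>\<^bsub>G Mod Gam\<^esub> D"
proof -
  have "mult (ret_group G L) C D = Gam #> ((SOME x. x \<in> C) \<otimes> (SOME x. x \<in> D))"
    unfolding ret_group_def using some_in[OF C] some_in[OF D] ret_class_eq by simp
  also have "\<dots> = (Gam #> (SOME x. x \<in> C)) \<otimes>\<^bsub>G Mod Gam\<^esub> (Gam #> (SOME x. x \<in> D))"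
    using msum some_in(1)[OF C] some_in(1)[OF D] by simp
  also have "\<dots> = C \<otimes>\<^bsub>G Mod Gam\<^esub> D" using some_in(2)[OF C, symmetric] some_in(2)[OF D, symmetric] by simp
  finally show ?thesis .
qed

lemma ret_one: "one (ret_group G L) = one (G Mod Gam)"
  unfolding ret_group_def using ret_class_eq[of \<one>] by simp

lemma ret_car: "carrier (ret_group G L) = carrier (G Mod Gam)"
  unfolding ret_group_def using ret_carrier_eq by simp

lemma ret_sg: "symmetric_group (ret_group G L) (ret_L (carrier G) L) (ret_R (carrier G) L R)"
  by (rule sg_transfer[OF fact_sg ret_car ret_one ret_mult retL_eq retR_eq])

end

theorem mainTheorem4:
  fixes G :: "('a, 'b) monoid_scheme"
    and L R :: "'a \<Rightarrow> 'a \<Rightarrow> 'a"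
  assumes sg: "symmetric_group G L R"
  defines "\<Gamma> \<equiv> {a \<in> carrier G. \<forall>u\<in>carrier G. L a u = u}"
  shows
    "\<Gamma> = {a \<in> carrier G. \<forall>u\<in>carrier G. R u a = u}
     \<and> \<Gamma> \<lhd> G
     \<and> (\<forall>x\<in>\<Gamma>. \<forall>y\<in>\<Gamma>. x \<otimes>\<^bsub>G\<^esub> y = y \<otimes>\<^bsub>G\<^esub> x)
     \<and> (\<forall>a\<in>carrier G. \<forall>g\<in>\<Gamma>. L a g \<in> \<Gamma> \<and> R g a \<in> \<Gamma>)
     \<and> (\<forall>a\<in>carrier G. \<forall>b\<in>carrier G.
          quot_L G \<Gamma> L (\<Gamma> #>\<^bsub>G\<^esub> a) (\<Gamma> #>\<^bsub>G\<^esub> b) = \<Gamma> #>\<^bsub>G\<^esub> L a b \<and>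
          quot_R G \<Gamma> R (\<Gamma> #>\<^bsub>G\<^esub> a) (\<Gamma> #>\<^bsub>G\<^esub> b) = \<Gamma> #>\<^bsub>G\<^esub> R a b)
     \<and> symmetric_group (G Mod \<Gamma>) (quot_L G \<Gamma> L) (quot_R G \<Gamma> R)
     \<and> symmetric_set (ret_carrier (carrier G) L) (ret_L (carrier G) L) (ret_R (carrier G) L R)
     \<and> (\<exists>\<phi>. (\<forall>a\<in>carrier G. \<phi> (\<Gamma> #>\<^bsub>G\<^esub> a) = ret_class (carrier G) L a)
           \<and> symset_iso (carrier (G Mod \<Gamma>)) (quot_L G \<Gamma> L) (quot_R G \<Gamma> R)
                 (ret_carrier (carrier G) L) (ret_L (carrier G) L) (ret_R (carrier G) L R) \<phi>
           \<and> (\<forall>a\<in>carrier G. \<forall>b\<in>carrier G.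
                mult (ret_group G L) (ret_class (carrier G) L a) (ret_class (carrier G) L b)
                  = ret_class (carrier G) L (a \<otimes>\<^bsub>G\<^esub> b))
           \<and> symmetric_group (ret_group G L) (ret_L (carrier G) L) (ret_R (carrier G) L R)
           \<and> \<phi> \<in> iso (G Mod \<Gamma>) (ret_group G L))"
proof -
  have grp: "group G" using sg unfolding symmetric_group_def by blast
  interpret symgrp G L R by (intro symgrp.intro symgrp_axioms.intro grp sg)
  have rc: "carrier (ret_group G L) = ret_carrier (carrier G) L" by (simp add: ret_group_def)
  have iso: "symset_iso (carrier (G Mod Gam)) (quot_L G Gam L) (quot_R G Gam R)
                 (ret_carrier (carrier G) L) (ret_L (carrier G) L) (ret_R (carrier G) L R) (\<lambda>C. C)"
    unfolding symset_iso_def ret_carrier_eq using retL_eq retR_eq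
    by (simp add: bij_betw_def)
  have cls: "\<forall>a\<in>carrier G. \<forall>b\<in>carrier G.
                mult (ret_group G L) (ret_class (carrier G) L a) (ret_class (carrier G) L b)
                  = ret_class (carrier G) L (a \<otimes>\<^bsub>G\<^esub> b)"
  proof (intro ballI)
    fix a b assume ab: "a \<in> carrier G" "b \<in> carrier G"
    show "mult (ret_group G L) (ret_class (carrier G) L a) (ret_class (carrier G) L b)
                  = ret_class (carrier G) L (a \<otimes>\<^bsub>G\<^esub> b)"
      using ab ret_mult[OF mem_fact[OF ab(1)] mem_fact[OF ab(2)]] msum[OF ab] ret_class_eq
      by simp
  qed
  have hom: "(\<lambda>C. C) \<in> iso (G Mod Gam) (ret_group G L)"
    unfolding iso_def hom_def using ret_car ret_mult by (simp add: bij_betw_def)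
  have ss: "symmetric_set (ret_carrier (carrier G) L) (ret_L (carrier G) L) (ret_R (carrier G) L R)"
    using sg_symset[OF ret_sg] unfolding rc .
  show ?thesis unfolding \<Gamma>_def
  proof (intro conjI)
    show "Gam = {a \<in> carrier G. \<forall>u\<in>carrier G. R u a = u}" by (rule Gam_eq)
    show "Gam \<lhd> G" by (rule Gam_normal)
    show "\<forall>x\<in>Gam. \<forall>y\<in>Gam. x \<otimes>\<^bsub>G\<^esub> y = y \<otimes>\<^bsub>G\<^esub> x" using Gam_comm by blast
    show "\<forall>a\<in>carrier G. \<forall>g\<in>Gam. L a g \<in> Gam \<and> R g a \<in> Gam" using L_Gam_in G1 by blast
    show "\<forall>a\<in>carrier G. \<forall>b\<in>carrier G.
          quot_L G Gam L (Gam #>\<^bsub>G\<^esub> a) (Gam #>\<^bsub>G\<^esub> b) = Gam #>\<^bsub>G\<^esub> L a b \<and>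
          quot_R G Gam R (Gam #>\<^bsub>G\<^esub> a) (Gam #>\<^bsub>G\<^esub> b) = Gam #>\<^bsub>G\<^esub> R a b" using qL qR by blast
    show "symmetric_group (G Mod Gam) (quot_L G Gam L) (quot_R G Gam R)" by (rule fact_sg)
    show "symmetric_set (ret_carrier (carrier G) L) (ret_L (carrier G) L) (ret_R (carrier G) L R)"
      by (rule ss)
    show "\<exists>\<phi>. (\<forall>a\<in>carrier G. \<phi> (Gam #>\<^bsub>G\<^esub> a) = ret_class (carrier G) L a)
           \<and> symset_iso (carrier (G Mod Gam)) (quot_L G Gam L) (quot_R G Gam R)
                 (ret_carrier (carrier G) L) (ret_L (carrier G) L) (ret_R (carrier G) L R) \<phi>
           \<and> (\<forall>a\<in>carrier G. \<forall>b\<in>carrier G.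
                mult (ret_group G L) (ret_class (carrier G) L a) (ret_class (carrier G) L b)
                  = ret_class (carrier G) L (a \<otimes>\<^bsub>G\<^esub> b))
           \<and> symmetric_group (ret_group G L) (ret_L (carrier G) L) (ret_R (carrier G) L R)
           \<and> \<phi> \<in> iso (G Mod Gam) (ret_group G L)"
      using iso cls ret_sg hom ret_class_eq by (intro exI[of _ "\<lambda>C. C"]) auto
  qed
qed

end
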